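(* Let $k,l\ge1$ and $\lambda\in\mathbb{Y}_{k,l}$ with $\lambda_l=0$. Then there exists a partition $\mathcal{P}$ of $\mathbb{Y}_{k,l}(\lambda)$ such that every block of $\mathcal{P}$ can be written as $\{\lambda^{(1)},\dots,\lambda^{(m)}\}$ with $m\ge2$ and $\lambda^{(1)}\nearrow\lambda^{(2)}\nearrow\cdots\nearrow\lambda^{(m)}$.
   Context: $\mathbb{Y}_{k,l}=\{(\lambda_1,\dots,\lambda_l)\in\mathbb{Z}^l\mid k\ge\lambda_1\ge\cdots\ge\lambda_l\ge0\}$ (Young diagrams fitting in a $k\times l$ rectangle). For $\lambda\in\mathbb{Y}_{k,l}$, $\mathbb{Y}_{k,l}(\lambda)=\{\mu\in\mathbb{Y}_{k,l}\mid \lambda_i\le\mu_i,\ i=1,\dots,l\}$. For $\lambda,\mu\in\mathbb{Y}_{k,l}$, $\lambda\nearrow\mu$ means $\mu$ is obtained from $\lambda$ by adding one box, i.e. $\mu_j=\lambda_j+1$ for exactly one index $j$ and $\mu_i=\lambda_i$ for all $i\ne j$. *)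

theory Defs
  imports Main "HOL-Library.Disjoint_Sets"
begin

text \<open>Young diagrams in a k x l rectangle, represented as lists of length l
  (entry i-1 of the list is lambda_i).\<close>

definition young :: "nat \<Rightarrow> nat \<Rightarrow> nat list set" where
  "young k l = {lam. length lam = l \<and> (\<forall>i<l. lam ! i \<le> k)
      \<and> (\<forall>i j. i \<le> j \<longrightarrow> j < l \<longrightarrow> lam ! j \<le> lam ! i)}"

definition young_above :: "nat \<Rightarrow> nat \<Rightarrow> nat list \<Rightarrow> nat list set" where
  "young_above k l lam = {mu \<in> young k l. \<forall>i<l. lam ! i \<le> mu ! i}"

definition add_box :: "nat list \<Rightarrow> nat list \<Rightarrow> bool" where
  "add_box lam mu \<longleftrightarrow> length mu = length lam \<and>
     (\<exists>j<length lam. mu ! j = lam ! j + 1 \<and> (\<forall>i<length lam. i \<noteq> j \<longrightarrow> mu ! i = lam ! i))"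

end

theory Submission
  imports Defs
begin

definition chn :: "nat list list \<Rightarrow> bool" where
  "chn xs \<longleftrightarrow> (\<forall>i. Suc i < length xs \<longrightarrow> add_box (xs ! i) (xs ! Suc i))"

definition chainable :: "nat list set \<Rightarrow> bool" where
  "chainable S \<longleftrightarrow> (\<exists>P. partition_on S P \<and>
    (\<forall>B\<in>P. \<exists>xs. B = set xs \<and> length xs \<ge> 2 \<and> chn xs))"

lemma add_box_Cons: "add_box x y \<Longrightarrow> add_box (a#x) (a#y)"
  unfolding add_box_def
proof (elim conjE exE)
  fix j assume h: "length y = length x" "j < length x" "y ! j = x ! j + 1"
    "\<forall>i<length x. i \<noteq> j \<longrightarrow> y ! i = x ! i"
  show "length (a # y) = length (a # x) \<and>
    (\<exists>j<length (a # x). (a # y) ! j = (a # x) ! j + 1 \<and>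
      (\<forall>i<length (a # x). i \<noteq> j \<longrightarrow> (a # y) ! i = (a # x) ! i))"
  proof (intro conjI exI[of _ "Suc j"] allI impI)
    fix i assume "i < length (a # x)" "i \<noteq> Suc j"
    then show "(a # y) ! i = (a # x) ! i" using h by (cases i) auto
  qed (use h in auto)
qed

lemma add_box_head: "add_box (c#x) (Suc c#x)"
  unfolding add_box_def
  by (rule conjI, simp, rule exI[of _ 0]) (auto simp: nth_Cons split: nat.splits)

lemma chn_map: "chn xs \<Longrightarrow> chn (map (Cons a) xs)"
  unfolding chn_def by (auto intro: add_box_Cons)

lemma chn_Cons: "chn xs \<Longrightarrow> xs \<noteq> [] \<Longrightarrow> add_box x (hd xs) \<Longrightarrow> chn (x # xs)"
  unfolding chn_def
  apply (intro allI impI)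
  subgoal for i by (cases i) (auto simp: hd_conv_nth)
  done

lemma ch_empty: "chainable {}"
  unfolding chainable_def by (rule exI[of _ "{}"]) (simp add: partition_on_empty)

lemma ch_Un:
  assumes "chainable A" "chainable B" "A \<inter> B = {}"
  shows "chainable (A \<union> B)"
proof -
  obtain P where P: "partition_on A P" "\<forall>B\<in>P. \<exists>xs. B = set xs \<and> length xs \<ge> 2 \<and> chn xs"
    using assms(1) unfolding chainable_def by blast
  obtain Q where Q: "partition_on B Q" "\<forall>B\<in>Q. \<exists>xs. B = set xs \<and> length xs \<ge> 2 \<and> chn xs"
    using assms(2) unfolding chainable_def by blast
  have "partition_on (A \<union> B) (P \<union> Q)"
    using P(1) Q(1) assms(3) unfolding partition_on_def
    by (auto intro!: disjoint_union)
  then show ?thesis unfolding chainable_def using P(2) Q(2) by blast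
qed

lemma ch_UN:
  assumes "finite I" "\<forall>a\<in>I. chainable (S a)"
    "\<forall>a\<in>I. \<forall>b\<in>I. a \<noteq> b \<longrightarrow> S a \<inter> S b = {}"
  shows "chainable (\<Union>a\<in>I. S a)"
  using assms
proof (induction I rule: finite_induct)
  case empty then show ?case by (simp add: ch_empty)
next
  case (insert x F)
  have "chainable (S x \<union> (\<Union>a\<in>F. S a))"
    using insert by (intro ch_Un) auto
  then show ?case by simp
qed

lemma ch_list: "length xs \<ge> 2 \<Longrightarrow> chn xs \<Longrightarrow> chainable (set xs)"
  unfolding chainable_def
  by (rule exI[of _ "{set xs}"]) (use partition_on_space[of "set xs"] in force)

lemma ch_Cons_img:
  assumes "chainable S" shows "chainable (Cons a ` S)"
proof -
  obtain P where P: "partition_on S P" "\<forall>B\<in>P. \<exists>xs. B = set xs \<and> length xs \<ge> 2 \<and> chn xs"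
    using assms unfolding chainable_def by blast
  have "partition_on (Cons a ` S) ((`) (Cons a) ` P - {{}})"
    by (rule partition_on_inj_image[OF P(1)]) (auto simp: inj_on_def)
  moreover have "\<forall>B\<in>(`) (Cons a) ` P - {{}}. \<exists>xs. B = set xs \<and> length xs \<ge> 2 \<and> chn xs"
  proof
    fix B assume "B \<in> (`) (Cons a) ` P - {{}}"
    then obtain C where C: "C \<in> P" "B = Cons a ` C" by auto
    then obtain xs where "C = set xs" "length xs \<ge> 2" "chn xs" using P(2) by blast
    then show "\<exists>xs. B = set xs \<and> length xs \<ge> 2 \<and> chn xs"
      using C by (intro exI[of _ "map (Cons a) xs"]) (auto simp: chn_map)
  qed
  ultimately show ?thesis unfolding chainable_def by blast
qed

lemma young_Nil: "young k 0 = {[]}"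
  unfolding young_def by auto

lemma young_Cons: "(a # v) \<in> young k (Suc m) \<longleftrightarrow> a \<le> k \<and> v \<in> young a m"
proof
  assume h: "a # v \<in> young k (Suc m)"
  have L: "length (a#v) = Suc m" and B: "\<And>i. i < Suc m \<Longrightarrow> (a#v) ! i \<le> k"
    and M: "\<And>i j. i \<le> j \<Longrightarrow> j < Suc m \<Longrightarrow> (a#v) ! j \<le> (a#v) ! i"
    using h unfolding young_def by auto
  have "length v = m" using L by simp
  moreover have "a \<le> k" using B[of 0] by simp
  moreover have "\<forall>i<m. v ! i \<le> a"
  proof (intro allI impI)
    fix i assume "i < m"
    then have "(a#v) ! Suc i \<le> (a#v) ! 0" by (intro M) auto
    then show "v ! i \<le> a" by simp
  qed
  moreover have "\<forall>i j. i \<le> j \<longrightarrow> j < m \<longrightarrow> v ! j \<le> v ! i"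
  proof (intro allI impI)
    fix i j assume "i \<le> j" "j < m"
    then have "(a#v) ! Suc j \<le> (a#v) ! Suc i" by (intro M) auto
    then show "v ! j \<le> v ! i" by simp
  qed
  ultimately show "a \<le> k \<and> v \<in> young a m" unfolding young_def by blast
next
  assume h: "a \<le> k \<and> v \<in> young a m"
  have L: "length v = m" and B: "\<And>i. i < m \<Longrightarrow> v ! i \<le> a"
    and M: "\<And>i j. i \<le> j \<Longrightarrow> j < m \<Longrightarrow> v ! j \<le> v ! i" and ak: "a \<le> k"
    using h unfolding young_def by auto
  have len: "length (a#v) = Suc m" using L by simp
  have b: "\<forall>i<Suc m. (a#v) ! i \<le> k"
  proof (intro allI impI)
    fix i assume "i < Suc m" then show "(a#v) ! i \<le> k"
      using ak B by (cases i) (auto intro: order_trans)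
  qed
  have c: "\<forall>i j. i \<le> j \<longrightarrow> j < Suc m \<longrightarrow> (a#v) ! j \<le> (a#v) ! i"
  proof (intro allI impI)
    fix i j assume ij: "i \<le> j" "j < Suc m"
    show "(a#v) ! j \<le> (a#v) ! i"
    proof (cases j)
      case 0 then show ?thesis using ij by simp
    next
      case (Suc j')
      then show ?thesis using ij B M by (cases i) auto
    qed
  qed
  show "a # v \<in> young k (Suc m)" using len b c unfolding young_def by blast
qed

lemma young_mono: "v \<in> young a m \<Longrightarrow> a \<le> b \<Longrightarrow> v \<in> young b m"
  unfolding young_def by force

lemma slice:
  "young_above k (Suc m) (b#bs) = (\<Union>a\<in>{b..k}. Cons a ` young_above a m bs)"
proof (intro set_eqI iffI)
  fix x assume x: "x \<in> young_above k (Suc m) (b#bs)"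
  then have "x \<in> young k (Suc m)" by (simp add: young_above_def)
  then obtain a v where xv: "x = a # v" unfolding young_def by (cases x) auto
  have y: "a \<le> k" "v \<in> young a m" using x xv young_Cons by (auto simp: young_above_def)
  have ba: "b \<le> a" using x xv unfolding young_above_def by force
  have "\<forall>i<m. bs ! i \<le> v ! i"
  proof (intro allI impI)
    fix i assume "i < m"
    then have "(b#bs) ! Suc i \<le> x ! Suc i" using x unfolding young_above_def by blast
    then show "bs ! i \<le> v ! i" using xv by simp
  qed
  then show "x \<in> (\<Union>a\<in>{b..k}. Cons a ` young_above a m bs)"
    using y ba xv unfolding young_above_def by auto
next
  fix x assume "x \<in> (\<Union>a\<in>{b..k}. Cons a ` young_above a m bs)"
  then obtain a v where h: "b \<le> a" "a \<le> k" "x = a # v" "v \<in> young a m"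
    "\<forall>i<m. bs ! i \<le> v ! i" unfolding young_above_def by auto
  have "\<forall>i<Suc m. (b#bs) ! i \<le> x ! i"
  proof (intro allI impI)
    fix i assume "i < Suc m" then show "(b#bs) ! i \<le> x ! i" using h by (cases i) auto
  qed
  then show "x \<in> young_above k (Suc m) (b#bs)"
    using h young_Cons unfolding young_above_def by auto
qed

fun stair :: "nat \<Rightarrow> nat \<Rightarrow> nat list list" where
  "stair c 0 = [[]]"
| "stair c (Suc m) = (c # replicate m c) # map (Cons (Suc c)) (stair c m)"

lemma stair_ne: "stair c m \<noteq> []" by (cases m) auto

lemma stair_hd: "hd (stair c m) = replicate m c" by (cases m) auto

lemma stair_len: "length (stair c m) = Suc m" by (induction m) auto

lemma stair_chn: "chn (stair c m)"
proof (induction m)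
  case 0 then show ?case by (simp add: chn_def)
next
  case (Suc m)
  show ?case unfolding stair.simps
    by (rule chn_Cons) (auto simp: chn_map Suc stair_ne hd_map stair_hd add_box_head)
qed

lemma young_above_const: "young_above c m (replicate m c) = {replicate m c}"
proof (intro set_eqI iffI)
  fix x assume x: "x \<in> young_above c m (replicate m c)"
  have L: "length x = m" and B: "\<And>i. i < m \<Longrightarrow> x ! i \<le> c"
    and G: "\<And>i. i < m \<Longrightarrow> replicate m c ! i \<le> x ! i"
    using x unfolding young_above_def young_def by auto
  have "\<And>i. i < m \<Longrightarrow> x ! i = c"
  proof -
    fix i assume "i < m"
    then show "x ! i = c" using B[of i] G[of i] by simp
  qed
  then show "x \<in> {replicate m c}" using L by (auto intro: nth_equalityI)
qed (auto simp: young_above_def young_def)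

lemma young_above_stair: "young_above (Suc c) m (replicate m c) = set (stair c m)"
proof (induction m)
  case 0 then show ?case by (simp add: young_above_def young_Nil)
next
  case (Suc m)
  have "{c..Suc c} = {c, Suc c}" by auto
  then show ?case
    by (simp only: replicate_Suc slice) (simp add: young_above_const Suc)
qed

lemma main:
  "\<forall>k bs. bs \<in> young k (Suc n) \<longrightarrow> bs ! n < k \<longrightarrow> chainable (young_above k (Suc n) bs)"
proof (induction n)
  case 0
  show ?case
  proof (intro allI impI)
    fix k bs assume h: "bs \<in> young k (Suc 0)" "bs ! 0 < k"
    then obtain b where bs: "bs = [b]" unfolding young_def
      by (cases bs) auto
    have "young_above k (Suc 0) bs = set (map (\<lambda>a. [a]) [b..<Suc k])"
      unfolding bs slice by (auto simp: young_above_def young_Nil)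
    moreover have "chn (map (\<lambda>a. [a]) [b..<Suc k])"
      unfolding chn_def using add_box_head[of _ "[]"] by (auto simp del: upt_Suc)
    moreover have "length (map (\<lambda>a. [a]) [b..<Suc k]) \<ge> 2" using h bs by simp
    ultimately show "chainable (young_above k (Suc 0) bs)" by (metis ch_list)
  qed
next
  case (Suc n)
  show ?case
  proof (intro allI impI)
    fix k bs assume h: "bs \<in> young k (Suc (Suc n))" "bs ! Suc n < k"
    have "length bs = Suc (Suc n)" using h(1) by (simp add: young_def)
    then obtain b bs' where bs: "bs = b # bs'" by (cases bs) auto
    have hb: "b \<le> k" "bs' \<in> young b (Suc n)" using h(1) unfolding bs young_Cons by simp_all
    have lt: "bs' ! n < k" using h bs by simp
    have disj: "\<forall>a\<in>I. \<forall>a'\<in>I. a \<noteq> a' \<longrightarrow> Cons a ` young_above a (Suc n) bs' \<inter> Cons a' ` young_above a' (Suc n) bs' = {}"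
      for I by auto
    have IHa: "chainable (Cons a ` young_above a (Suc n) bs')" if "b \<le> a" "bs' ! n < a" for a
      using Suc[rule_format, of bs' a] young_mono[OF hb(2) that(1)] that
      by (simp add: ch_Cons_img)
    show "chainable (young_above k (Suc (Suc n)) bs)"
    proof (cases "bs' ! n < b")
      case True
      have "\<forall>a\<in>{b..k}. chainable (Cons a ` young_above a (Suc n) bs')"
      proof
        fix a assume "a \<in> {b..k}"
        then show "chainable (Cons a ` young_above a (Suc n) bs')"
          using True by (intro IHa) auto
      qed
      then show ?thesis unfolding bs slice
        by (intro ch_UN disj) simp_all
    next
      case False
      have "\<forall>i<Suc n. bs' ! i = b"
      proof (intro allI impI)
        fix i assume i: "i < Suc n"
        have "bs' ! i \<le> b" using hb(2) i unfolding young_def by blast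
        moreover have "bs' ! n \<le> bs' ! i" using hb(2) i unfolding young_def by simp
        ultimately show "bs' ! i = b" using False by linarith
      qed
      moreover have "length bs' = Suc n" using hb(2) by (simp add: young_def)
      ultimately have rep: "bs' = replicate (Suc n) b" by (intro nth_equalityI) (simp_all del: replicate_Suc)
      have bk: "Suc b \<le> k" using lt rep by (simp del: replicate_Suc)
      have split: "{b..k} = {b..Suc b} \<union> {Suc (Suc b)..k}" using bk by auto
      have A: "chainable (\<Union>a\<in>{b..Suc b}. Cons a ` young_above a (Suc n) bs')"
      proof -
        have "(\<Union>a\<in>{b..Suc b}. Cons a ` young_above a (Suc n) bs') =
          young_above (Suc b) (Suc (Suc n)) (replicate (Suc (Suc n)) b)"
          by (simp only: replicate_Suc[of "Suc n"] slice rep)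
        also have "\<dots> = set (stair b (Suc (Suc n)))" by (rule young_above_stair)
        finally show ?thesis using ch_list[OF _ stair_chn, of b "Suc (Suc n)"] by (simp only: stair_len)
      qed
      have B: "chainable (\<Union>a\<in>{Suc (Suc b)..k}. Cons a ` young_above a (Suc n) bs')"
      proof -
        have "\<forall>a\<in>{Suc (Suc b)..k}. chainable (Cons a ` young_above a (Suc n) bs')"
        proof
          fix a assume "a \<in> {Suc (Suc b)..k}"
          then show "chainable (Cons a ` young_above a (Suc n) bs')"
            using rep by (intro IHa) (auto simp del: replicate_Suc)
        qed
        then show ?thesis by (intro ch_UN disj) simp_all
      qed
      have D: "(\<Union>a\<in>{b..Suc b}. Cons a ` young_above a (Suc n) bs') \<inter>
          (\<Union>a\<in>{Suc (Suc b)..k}. Cons a ` young_above a (Suc n) bs') = {}"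
        by auto
      show ?thesis unfolding bs slice split UN_Un
        by (rule ch_Un[OF A B D])
    qed
  qed
qed

theorem lemmaA2:
  fixes k l :: nat and lam :: "nat list"
  assumes "k \<ge> 1" and "l \<ge> 1"
    and "lam \<in> young k l"
    and "lam ! (l - 1) = 0"
  shows "\<exists>P. partition_on (young_above k l lam) P \<and>
    (\<forall>B\<in>P. \<exists>xs. B = set xs \<and> length xs \<ge> 2 \<and>
        (\<forall>i. Suc i < length xs \<longrightarrow> add_box (xs ! i) (xs ! Suc i)))"
proof -
  obtain n where l: "l = Suc n" using assms(2) by (cases l) auto
  have "chainable (young_above k l lam)"
    using main[of n] assms l by auto
  then show ?thesis unfolding chainable_def chn_def .
qed

end
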